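(* Let $\mathcal{P}$ be a polyomino, $\mathbb{K}$ a field, $S=\mathbb{K}[x_v \mid v\in V(\mathcal{P})]$ standard graded, $I_{\mathcal{P}}\subset S$ the polyomino ideal and $J_{\mathcal{P}}\subset S$ the toric ideal of $\mathcal{P}$ (both defined in the context). Then $I_{\mathcal{P}}=(J_{\mathcal{P}})_2$, i.e. $I_{\mathcal{P}}$ is the ideal generated by the homogeneous component of degree $2$ of $J_{\mathcal{P}}$; equivalently, the minimal generators of $I_{\mathcal{P}}$ are exactly the minimal generators of degree $2$ of $J_{\mathcal{P}}$.
   Context: For $a\in\mathbb{N}^2$ the cell $[a,a+(1,1)]$ has vertices $a,a+(1,0),a+(0,1),a+(1,1)$ and the four obvious edges. A polyomino $\mathcal{P}$ is a finite nonempty set of cells such that any two cells $C,D\in\mathcal{P}$ are joined by a sequence $C=C_1,\dots,C_m=D$ of cells of $\mathcal{P}$ with $C_i\cap C_{i+1}$ an edge of $C_i$. $V(\mathcal{P})$ is the union of the vertex sets of its cells. For $a=(i,j)$, $b=(k,\ell)$ with $i<k$, $j<\ell$, the interval $[a,b]=\{(p,q)\in\mathbb{N}^2: i\le p\le k,\ j\le q\le \ell\}$ is a proper interval; $a,b$ are its diagonal corners and $c=(i,\ell)$, $d=(k,j)$ its anti-diagonal corners. It is an inner interval of $\mathcal{P}$ if all cells contained in $[a,b]$ belong to $\mathcal{P}$. The polyomino ideal $I_{\mathcal{P}}$ is generated by all inner 2-minors $x_ax_b-x_cx_d$, $[a,b]$ an inner interval of $\mathcal{P}$ with anti-diagonal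 corners $c,d$. Toric ideal: a hole of $\mathcal{P}$ is a finite nonempty set $\mathcal{H}$ of cells of $\mathbb{N}^2$ not in $\mathcal{P}$, any two of which are connected by a path of cells in $\mathcal{H}$ (consecutive cells sharing an edge), and maximal with these properties. Order $\mathbb{N}^2$ by $(a_1,a_2)<(b_1,b_2)$ iff $a_1<b_1$, or $a_1=b_1$ and $a_2<b_2$; the lower left corner of a hole is the minimum of its vertices. Let $\mathcal{H}_1,\dots,\mathcal{H}_r$ be the holes of $\mathcal{P}$ with lower left corners $e_k=(i_k,j_k)$, and $\mathcal{F}_k=\{(i,j)\in V(\mathcal{P}): i\le i_k,\ j\le j_k\}$. A horizontal edge interval of $\mathcal{P}$ is a set $\{(t,j): i\le t\le k\}$ such that $\{(t,j),(t+1,j)\}$ is an edge of a cell of $\mathcal{P}$ for $t=i,\dots,k-1$; it is maximal if not strictly contained in another one; vertical edge intervals are defined analogously. Each vertex $a\in V(\mathcal{P})$ lies in a unique maximal horizontal edge interval $H(a)$ and a unique maximal vertical edge interval $V(a)$. Take variables $h_H$ for each maximal horizontal edge interval $H$, $v_V$ for each maximal vertical edge interval $V$, and $w_1,\dots,w_r$, and define $\varphi:S\to\mathbb{K}[h_H,v_V,w_k]$ by $\varphi(x_a)=h_{H(a)}v_{V(a)}\prod_{k:\,a\in\mathcal{F}_k}w_k$. The toric ideal is $J_{\mathcal{P}}=\ker\varphi$. *)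

theory Defs
  imports Main "HOL-Library.Poly_Mapping" "HOL-Library.Product_Lexorder"
begin

text \<open>Points of N^2 are pairs of naturals. A cell [a, a+(1,1)] is represented
by its lower left corner a. The order on pairs is the lexicographic one
(Product_Lexorder), as in the paper.\<close>

type_synonym pt = "nat \<times> nat"

definition cell_vertices :: "pt \<Rightarrow> pt set" where
  "cell_vertices a = {a, (fst a + 1, snd a), (fst a, snd a + 1), (fst a + 1, snd a + 1)}"

definition cell_edges :: "pt \<Rightarrow> pt set set" where
  "cell_edges a = {{a, (fst a + 1, snd a)}, {a, (fst a, snd a + 1)},
                   {(fst a + 1, snd a), (fst a + 1, snd a + 1)},
                   {(fst a, snd a + 1), (fst a + 1, snd a + 1)}}"

definition cell_adj :: "pt \<Rightarrow> pt \<Rightarrow> bool" where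
  "cell_adj c d \<longleftrightarrow> cell_vertices c \<inter> cell_vertices d \<in> cell_edges c"

definition cells_connected :: "pt set \<Rightarrow> bool" where
  "cells_connected A \<longleftrightarrow>
     (\<forall>c\<in>A. \<forall>d\<in>A. (\<lambda>x y. x \<in> A \<and> y \<in> A \<and> cell_adj x y)\<^sup>*\<^sup>* c d)"

definition polyomino :: "pt set \<Rightarrow> bool" where
  "polyomino P \<longleftrightarrow> finite P \<and> P \<noteq> {} \<and> cells_connected P"

definition vertices :: "pt set \<Rightarrow> pt set" where
  "vertices P = (\<Union>c\<in>P. cell_vertices c)"

definition inner_interval :: "pt set \<Rightarrow> pt \<Rightarrow> pt \<Rightarrow> bool" where
  "inner_interval P a b \<longleftrightarrow> fst a < fst b \<and> snd a < snd b \<and>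
     (\<forall>c. cell_vertices c \<subseteq> {p. fst a \<le> fst p \<and> fst p \<le> fst b \<and> snd a \<le> snd p \<and> snd p \<le> snd b}
          \<longrightarrow> c \<in> P)"

type_synonym 'k poly2 = "(pt \<Rightarrow>\<^sub>0 nat) \<Rightarrow>\<^sub>0 'k"

definition var :: "pt \<Rightarrow> 'k::comm_ring_1 poly2" where
  "var a = Poly_Mapping.single (Poly_Mapping.single a 1) 1"

definition polyring :: "pt set \<Rightarrow> 'k::comm_ring_1 poly2 set" where
  "polyring V = {p. \<forall>m\<in>Poly_Mapping.keys p. Poly_Mapping.keys m \<subseteq> V}"

inductive_set ideal_gen :: "'a::comm_ring_1 set \<Rightarrow> 'a set \<Rightarrow> 'a set" for R G where
  zero: "0 \<in> ideal_gen R G"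
| gen: "g \<in> G \<Longrightarrow> g \<in> ideal_gen R G"
| add: "p \<in> ideal_gen R G \<Longrightarrow> q \<in> ideal_gen R G \<Longrightarrow> p + q \<in> ideal_gen R G"
| mult: "r \<in> R \<Longrightarrow> p \<in> ideal_gen R G \<Longrightarrow> r * p \<in> ideal_gen R G"

definition inner_minors :: "pt set \<Rightarrow> 'k::comm_ring_1 poly2 set" where
  "inner_minors P = {var a * var b - var (fst a, snd b) * var (fst b, snd a) | a b.
                       inner_interval P a b}"

definition polyomino_ideal :: "pt set \<Rightarrow> 'k::comm_ring_1 poly2 set" where
  "polyomino_ideal P = ideal_gen (polyring (vertices P)) (inner_minors P)"

definition hole :: "pt set \<Rightarrow> pt set \<Rightarrow> bool" where
  "hole P H \<longleftrightarrow> finite H \<and> H \<noteq> {} \<and> H \<inter> P = {} \<and> cells_connected H \<and>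
     (\<forall>H'. H \<subseteq> H' \<and> finite H' \<and> H' \<noteq> {} \<and> H' \<inter> P = {} \<and> cells_connected H' \<longrightarrow> H' = H)"

definition lower_left :: "pt set \<Rightarrow> pt" where
  "lower_left H = Min (vertices H)"

definition F_set :: "pt set \<Rightarrow> pt set \<Rightarrow> pt set" where
  "F_set P H = {v \<in> vertices P. fst v \<le> fst (lower_left H) \<and> snd v \<le> snd (lower_left H)}"

definition is_edge :: "pt set \<Rightarrow> pt set \<Rightarrow> bool" where
  "is_edge P e \<longleftrightarrow> (\<exists>c\<in>P. e \<in> cell_edges c)"

definition horiz_interval :: "pt set \<Rightarrow> pt set \<Rightarrow> bool" where
  "horiz_interval P E \<longleftrightarrow> (\<exists>i k j. i \<le> k \<and> E = {(t, j) | t. i \<le> t \<and> t \<le> k} \<and>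
       (\<forall>t. i \<le> t \<and> t < k \<longrightarrow> is_edge P {(t, j), (t + 1, j)}))"

definition vert_interval :: "pt set \<Rightarrow> pt set \<Rightarrow> bool" where
  "vert_interval P E \<longleftrightarrow> (\<exists>j l i. j \<le> l \<and> E = {(i, t) | t. j \<le> t \<and> t \<le> l} \<and>
       (\<forall>t. j \<le> t \<and> t < l \<longrightarrow> is_edge P {(i, t), (i, t + 1)}))"

definition max_horiz :: "pt set \<Rightarrow> pt set \<Rightarrow> bool" where
  "max_horiz P E \<longleftrightarrow> horiz_interval P E \<and> (\<forall>E'. horiz_interval P E' \<and> E \<subseteq> E' \<longrightarrow> E' = E)"

definition max_vert :: "pt set \<Rightarrow> pt set \<Rightarrow> bool" where
  "max_vert P E \<longleftrightarrow> vert_interval P E \<and> (\<forall>E'. vert_interval P E' \<and> E \<subseteq> E' \<longrightarrow> E' = E)"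

definition Hint :: "pt set \<Rightarrow> pt \<Rightarrow> pt set" where
  "Hint P a = (THE E. max_horiz P E \<and> a \<in> E)"

definition Vint :: "pt set \<Rightarrow> pt \<Rightarrow> pt set" where
  "Vint P a = (THE E. max_vert P E \<and> a \<in> E)"

text \<open>variables of the target ring: h_H, v_V (indexed by the maximal edge
intervals) and w_k (indexed by the holes themselves)\<close>
datatype tvar = hvar "pt set" | vvar "pt set" | wvar "pt set"

text \<open>exponent vector of phi(x_a) = h_{H(a)} v_{V(a)} prod_{a \<in> F_k} w_k\<close>
definition phi_exp :: "pt set \<Rightarrow> pt \<Rightarrow> tvar \<Rightarrow>\<^sub>0 nat" where
  "phi_exp P a = Poly_Mapping.single (hvar (Hint P a)) 1 + Poly_Mapping.single (vvar (Vint P a)) 1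
      + (\<Sum>H\<in>{H. hole P H \<and> a \<in> F_set P H}. Poly_Mapping.single (wvar H) 1)"

definition phi_mon :: "pt set \<Rightarrow> (pt \<Rightarrow>\<^sub>0 nat) \<Rightarrow> tvar \<Rightarrow>\<^sub>0 nat" where
  "phi_mon P m = (\<Sum>a\<in>Poly_Mapping.keys m. Poly_Mapping.map (\<lambda>e. Poly_Mapping.lookup m a * e) (phi_exp P a))"

definition phi :: "pt set \<Rightarrow> 'k::comm_ring_1 poly2 \<Rightarrow> (tvar \<Rightarrow>\<^sub>0 nat) \<Rightarrow>\<^sub>0 'k" where
  "phi P p = (\<Sum>m\<in>Poly_Mapping.keys p. Poly_Mapping.single (phi_mon P m) (Poly_Mapping.lookup p m))"

definition toric_ideal :: "pt set \<Rightarrow> 'k::comm_ring_1 poly2 set" where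
  "toric_ideal P = {p \<in> polyring (vertices P). phi P p = 0}"

definition mdeg :: "(pt \<Rightarrow>\<^sub>0 nat) \<Rightarrow> nat" where
  "mdeg m = (\<Sum>a\<in>Poly_Mapping.keys m. Poly_Mapping.lookup m a)"

definition homogeneous_of_degree :: "nat \<Rightarrow> 'k::comm_ring_1 poly2 \<Rightarrow> bool" where
  "homogeneous_of_degree d p \<longleftrightarrow> (\<forall>m\<in>Poly_Mapping.keys p. mdeg m = d)"

definition graded_part :: "nat \<Rightarrow> 'k::comm_ring_1 poly2 set \<Rightarrow> 'k poly2 set" where
  "graded_part d J = {p \<in> J. homogeneous_of_degree d p}"

end

theory Submission
  imports Defs
begin



lemma mem_cv: "p \<in> cell_vertices (c,d) \<longleftrightarrow> c \<le> fst p \<and> fst p \<le> c+1 \<and> d \<le> snd p \<and> snd p \<le> d+1"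
  by (cases p) (auto simp: cell_vertices_def)

lemma cell_adj_iff:
  "cell_adj (a,b) (c,d) \<longleftrightarrow> (c = a+1 \<and> d = b) \<or> (a = c+1 \<and> d = b) \<or> (c = a \<and> d = b+1) \<or> (c = a \<and> b = d+1)"
proof
  let ?I = "cell_vertices (a,b) \<inter> cell_vertices (c,d)"
  assume "cell_adj (a,b) (c,d)"
  then have "?I \<in> cell_edges (a,b)" by (simp add: cell_adj_def)
  then have "?I = {(a,b),(a+1,b)} \<or> ?I = {(a,b),(a,b+1)} \<or> ?I = {(a+1,b),(a+1,b+1)} \<or> ?I = {(a,b+1),(a+1,b+1)}"
    by (simp add: cell_edges_def)
  moreover have m: "\<And>p. p \<in> ?I \<longleftrightarrow> (a \<le> fst p \<and> fst p \<le> a+1 \<and> b \<le> snd p \<and> snd p \<le> b+1) \<and> (c \<le> fst p \<and> fst p \<le> c+1 \<and> d \<le> snd p \<and> snd p \<le> d+1)" by (simp add: mem_cv)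
  note m1 = m[of "(a,b)"] m[of "(a+1,b)"] m[of "(a,b+1)"] m[of "(a+1,b+1)"]
  ultimately show "(c = a+1 \<and> d = b) \<or> (a = c+1 \<and> d = b) \<or> (c = a \<and> d = b+1) \<or> (c = a \<and> b = d+1)"
    apply (elim disjE)
    using m1 by auto
next
  assume h: "(c = a+1 \<and> d = b) \<or> (a = c+1 \<and> d = b) \<or> (c = a \<and> d = b+1) \<or> (c = a \<and> b = d+1)"
  have "cell_vertices (a,b) \<inter> cell_vertices (c,d) \<in> cell_edges (a,b)"
    using h
    apply (elim disjE)
    subgoal
      apply (rule subst[of "{(a+1,b),(a+1,b+1)}"]) 
       apply (auto simp: mem_cv set_eq_iff) [1]
      by (simp add: cell_edges_def)
    subgoal
      apply (rule subst[of "{(a,b),(a,b+1)}"]) 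
       apply (auto simp: mem_cv set_eq_iff) [1]
      by (simp add: cell_edges_def)
    subgoal
      apply (rule subst[of "{(a,b+1),(a+1,b+1)}"]) 
       apply (auto simp: mem_cv set_eq_iff) [1]
      by (simp add: cell_edges_def)
    subgoal
      apply (rule subst[of "{(a,b),(a+1,b)}"]) 
       apply (auto simp: mem_cv set_eq_iff) [1]
      by (simp add: cell_edges_def)
    done
  then show "cell_adj (a,b) (c,d)" by (simp add: cell_adj_def)
qed



definition hseg :: "nat \<Rightarrow> nat \<Rightarrow> nat \<Rightarrow> pt set" where
  "hseg j i k = {(t,j) | t. i \<le> t \<and> t \<le> k}"
definition hok :: "pt set \<Rightarrow> nat \<Rightarrow> nat \<Rightarrow> nat \<Rightarrow> bool" where
  "hok P j i k \<longleftrightarrow> (\<forall>t. i \<le> t \<and> t < k \<longrightarrow> is_edge P {(t,j),(t+1,j)})"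

lemma mem_hseg: "x \<in> hseg j i k \<longleftrightarrow> snd x = j \<and> i \<le> fst x \<and> fst x \<le> k"
  by (cases x) (auto simp: hseg_def)

lemma horiz_alt: "horiz_interval P E \<longleftrightarrow> (\<exists>i k j. i \<le> k \<and> E = hseg j i k \<and> hok P j i k)"
  unfolding horiz_interval_def hseg_def hok_def by blast

lemma horiz_union:
  assumes "horiz_interval P E1" "horiz_interval P E2" "x \<in> E1" "x \<in> E2"
  shows "horiz_interval P (E1 \<union> E2)"
proof -
  obtain i1 k1 j1 where 1: "i1 \<le> k1" "E1 = hseg j1 i1 k1" "hok P j1 i1 k1" using assms(1) by (auto simp: horiz_alt)
  obtain i2 k2 j2 where 2: "i2 \<le> k2" "E2 = hseg j2 i2 k2" "hok P j2 i2 k2" using assms(2) by (auto simp: horiz_alt)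
  have x: "j1 = snd x" "j2 = snd x" "i1 \<le> fst x" "fst x \<le> k1" "i2 \<le> fst x" "fst x \<le> k2"
    using assms(3,4) 1 2 by (auto simp: mem_hseg)
  have e: "E1 \<union> E2 = hseg (snd x) (min i1 i2) (max k1 k2)"
  proof (rule set_eqI)
    fix y :: pt
    have "(i1 \<le> fst y \<and> fst y \<le> k1 \<or> i2 \<le> fst y \<and> fst y \<le> k2) \<longleftrightarrow> (min i1 i2 \<le> fst y \<and> fst y \<le> max k1 k2)"
      using x by (simp add: min_def max_def) linarith
    then show "y \<in> E1 \<union> E2 \<longleftrightarrow> y \<in> hseg (snd x) (min i1 i2) (max k1 k2)"
      unfolding 1(2) 2(2) mem_hseg x(1,2) Un_iff by blast
  qed
  have "hok P (snd x) (min i1 i2) (max k1 k2)"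
    unfolding hok_def
  proof (intro allI impI)
    fix t assume t: "min i1 i2 \<le> t \<and> t < max k1 k2"
    then have "(i1 \<le> t \<and> t < k1) \<or> (i2 \<le> t \<and> t < k2)" using x by linarith
    then show "is_edge P {(t, snd x), (t + 1, snd x)}"
      using 1(3) 2(3) x(1,2) unfolding hok_def by blast
  qed
  then show ?thesis unfolding horiz_alt using e 1(1) 2(1) by (intro exI[of _ "min i1 i2"] exI[of _ "max k1 k2"] exI[of _ "snd x"]) simp
qed

lemma is_edge_h:
  "is_edge P {(t,j),(t+1,j)} \<Longrightarrow> (t,j) \<in> P \<or> (j \<ge> 1 \<and> (t,j-1) \<in> P)"
  unfolding is_edge_def cell_edges_def
  by (auto simp: doubleton_eq_iff)

lemma is_edge_v:
  "is_edge P {(i,t),(i,t+1)} \<Longrightarrow> (i,t) \<in> P \<or> (i \<ge> 1 \<and> (i-1,t) \<in> P)"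
  unfolding is_edge_def cell_edges_def
  by (auto simp: doubleton_eq_iff)

lemma horiz_finite:
  assumes "finite P"
  shows "finite {E. horiz_interval P E \<and> x \<in> E}"
proof -
  define M where "M = Max (insert 0 (fst ` P))"
  define B where "B = max (fst x) (M+1)"
  have "{E. horiz_interval P E \<and> x \<in> E} \<subseteq> (\<lambda>(i,k). hseg (snd x) i k) ` ({0..fst x} \<times> {0..B})"
  proof
    fix E assume "E \<in> {E. horiz_interval P E \<and> x \<in> E}"
    then obtain i k j where 1: "i \<le> k" "E = hseg j i k" "hok P j i k" "x \<in> E" by (auto simp: horiz_alt)
    then have x: "j = snd x" "i \<le> fst x" "fst x \<le> k" by (auto simp: mem_hseg)
    have "k \<le> B"
    proof (cases "k \<le> fst x")
      case True then show ?thesis by (simp add: B_def)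
    next
      case False
      then have hk: "i \<le> k-1 \<and> k-1 < k" using x by linarith
      have "is_edge P {(k-1,j),(k-1+1,j)}" using 1(3)[unfolded hok_def, rule_format, OF hk] .
      then have "(k-1,j) \<in> P \<or> (j \<ge> 1 \<and> (k-1,j-1) \<in> P)" by (rule is_edge_h)
      then have "k-1 \<in> insert 0 (fst ` P)" by force
      then have "k - 1 \<le> M" unfolding M_def using assms by simp
      then show ?thesis unfolding B_def by linarith
    qed
    then show "E \<in> (\<lambda>(i,k). hseg (snd x) i k) ` ({0..fst x} \<times> {0..B})"
      using 1 x by (auto intro!: image_eqI[of _ _ "(i,k)"])
  qed
  then show ?thesis by (rule finite_subset) auto
qed

lemma horiz_max_ex:
  assumes "finite P" shows "\<exists>E. max_horiz P E \<and> x \<in> E"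
proof -
  let ?A = "{E. horiz_interval P E \<and> x \<in> E}"
  have "horiz_interval P (hseg (snd x) (fst x) (fst x))"
    unfolding horiz_alt hok_def by (intro exI[of _ "fst x"] exI[of _ "snd x"]) auto
  then have "hseg (snd x) (fst x) (fst x) \<in> ?A"
    by (auto simp: mem_hseg)
  then have "?A \<noteq> {}" by blast
  from finite_has_maximal[OF horiz_finite[OF assms] this]
  obtain m where m: "m \<in> ?A" "\<forall>b\<in>?A. m \<le> b \<longrightarrow> m = b" by blast
  then show ?thesis unfolding max_horiz_def by blast
qed

lemma max_horiz_unique:
  assumes "max_horiz P E1" "max_horiz P E2" "x \<in> E1" "x \<in> E2" shows "E1 = E2"
proof -
  have "horiz_interval P (E1 \<union> E2)" using assms horiz_union unfolding max_horiz_def by blast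
  then have "E1 \<union> E2 = E1" "E1 \<union> E2 = E2" using assms(1,2) unfolding max_horiz_def by blast+
  then show ?thesis by blast
qed

lemma Hint_prop:
  assumes "finite P" shows "max_horiz P (Hint P x) \<and> x \<in> Hint P x"
proof -
  have "\<exists>!E. max_horiz P E \<and> x \<in> E"
    using horiz_max_ex[OF assms, of x] max_horiz_unique by blast
  then show ?thesis unfolding Hint_def by (rule theI')
qed

lemma Hint_eq:
  assumes "finite P" "horiz_interval P E" "x \<in> E" "y \<in> E"
  shows "Hint P x = Hint P y"
proof -
  let ?H = "Hint P x"
  have H: "max_horiz P ?H" "x \<in> ?H" using Hint_prop[OF assms(1)] by auto
  have "horiz_interval P (E \<union> ?H)" using horiz_union[OF assms(2) _ assms(3) H(2)] H(1) unfolding max_horiz_def by blast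
  then have "E \<union> ?H = ?H" using H(1) unfolding max_horiz_def by blast
  then have "y \<in> ?H" using assms(4) by blast
  then show ?thesis using max_horiz_unique[OF H(1)] Hint_prop[OF assms(1), of y] by blast
qed

lemma Hint_row:
  assumes "finite P" "Hint P x = Hint P y"
  shows "snd x = snd y \<and> (\<forall>t. min (fst x) (fst y) \<le> t \<and> t < max (fst x) (fst y) \<longrightarrow> is_edge P {(t, snd x),(t+1, snd x)})"
proof -
  have H: "max_horiz P (Hint P x)" "x \<in> Hint P x" "y \<in> Hint P x" using Hint_prop[OF assms(1)] assms(2) by metis+
  then obtain i k j where 1: "i \<le> k" "Hint P x = hseg j i k" "hok P j i k" unfolding max_horiz_def horiz_alt by blast
  then have "snd x = j" "snd y = j" "i \<le> fst x" "fst x \<le> k" "i \<le> fst y" "fst y \<le> k" using H by (auto simp: mem_hseg)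
  then show ?thesis using 1(3) unfolding hok_def
  proof (intro conjI allI impI)
    fix t assume "min (fst x) (fst y) \<le> t \<and> t < max (fst x) (fst y)"
    then have "i \<le> t \<and> t < k" using \<open>i \<le> fst x\<close> \<open>fst x \<le> k\<close> \<open>i \<le> fst y\<close> \<open>fst y \<le> k\<close> by linarith
    then show "is_edge P {(t, snd x),(t+1, snd x)}" using 1(3) \<open>snd x = j\<close> unfolding hok_def by auto
  qed (use \<open>snd x = j\<close> \<open>snd y = j\<close> in auto)
qed

definition vseg :: "nat \<Rightarrow> nat \<Rightarrow> nat \<Rightarrow> pt set" where
  "vseg j i k = {(j,t) | t. i \<le> t \<and> t \<le> k}"
definition vok :: "pt set \<Rightarrow> nat \<Rightarrow> nat \<Rightarrow> nat \<Rightarrow> bool" where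
  "vok P j i k \<longleftrightarrow> (\<forall>t. i \<le> t \<and> t < k \<longrightarrow> is_edge P {(j,t),(j,t+1)})"

lemma mem_vseg: "x \<in> vseg j i k \<longleftrightarrow> fst x = j \<and> i \<le> snd x \<and> snd x \<le> k"
  by (cases x) (auto simp: vseg_def)

lemma vert_alt: "vert_interval P E \<longleftrightarrow> (\<exists>i k j. i \<le> k \<and> E = vseg j i k \<and> vok P j i k)"
  unfolding vert_interval_def vseg_def vok_def by blast

lemma vert_union:
  assumes "vert_interval P E1" "vert_interval P E2" "x \<in> E1" "x \<in> E2"
  shows "vert_interval P (E1 \<union> E2)"
proof -
  obtain i1 k1 j1 where 1: "i1 \<le> k1" "E1 = vseg j1 i1 k1" "vok P j1 i1 k1" using assms(1) by (auto simp: vert_alt)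
  obtain i2 k2 j2 where 2: "i2 \<le> k2" "E2 = vseg j2 i2 k2" "vok P j2 i2 k2" using assms(2) by (auto simp: vert_alt)
  have x: "j1 = fst x" "j2 = fst x" "i1 \<le> snd x" "snd x \<le> k1" "i2 \<le> snd x" "snd x \<le> k2"
    using assms(3,4) 1 2 by (auto simp: mem_vseg)
  have e: "E1 \<union> E2 = vseg (fst x) (min i1 i2) (max k1 k2)"
  proof (rule set_eqI)
    fix y :: pt
    have "(i1 \<le> snd y \<and> snd y \<le> k1 \<or> i2 \<le> snd y \<and> snd y \<le> k2) \<longleftrightarrow> (min i1 i2 \<le> snd y \<and> snd y \<le> max k1 k2)"
      using x by (simp add: min_def max_def) linarith
    then show "y \<in> E1 \<union> E2 \<longleftrightarrow> y \<in> vseg (fst x) (min i1 i2) (max k1 k2)"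
      unfolding 1(2) 2(2) mem_vseg x(1,2) Un_iff by blast
  qed
  have "vok P (fst x) (min i1 i2) (max k1 k2)"
    unfolding vok_def
  proof (intro allI impI)
    fix t assume t: "min i1 i2 \<le> t \<and> t < max k1 k2"
    then have "(i1 \<le> t \<and> t < k1) \<or> (i2 \<le> t \<and> t < k2)" using x by linarith
    then show "is_edge P {(fst x, t), (fst x, t + 1)}"
      using 1(3) 2(3) x(1,2) unfolding vok_def by blast
  qed
  then show ?thesis unfolding vert_alt using e 1(1) 2(1) by (intro exI[of _ "min i1 i2"] exI[of _ "max k1 k2"] exI[of _ "fst x"]) simp
qed

lemma vert_finite:
  assumes "finite P"
  shows "finite {E. vert_interval P E \<and> x \<in> E}"
proof -
  define M where "M = Max (insert 0 (snd ` P))"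
  define B where "B = max (snd x) (M+1)"
  have "{E. vert_interval P E \<and> x \<in> E} \<subseteq> (\<lambda>(i,k). vseg (fst x) i k) ` ({0..snd x} \<times> {0..B})"
  proof
    fix E assume "E \<in> {E. vert_interval P E \<and> x \<in> E}"
    then obtain i k j where 1: "i \<le> k" "E = vseg j i k" "vok P j i k" "x \<in> E" by (auto simp: vert_alt)
    then have x: "j = fst x" "i \<le> snd x" "snd x \<le> k" by (auto simp: mem_vseg)
    have "k \<le> B"
    proof (cases "k \<le> snd x")
      case True then show ?thesis by (simp add: B_def)
    next
      case False
      then have hk: "i \<le> k-1 \<and> k-1 < k" using x by linarith
      have "is_edge P {(j,k-1),(j,k-1+1)}" using 1(3)[unfolded vok_def, rule_format, OF hk] .
      then have "(j,k-1) \<in> P \<or> (j \<ge> 1 \<and> (j-1,k-1) \<in> P)" by (rule is_edge_v)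
      then have "k-1 \<in> insert 0 (snd ` P)" by force
      then have "k - 1 \<le> M" unfolding M_def using assms by simp
      then show ?thesis unfolding B_def by linarith
    qed
    then show "E \<in> (\<lambda>(i,k). vseg (fst x) i k) ` ({0..snd x} \<times> {0..B})"
      using 1 x by (auto intro!: image_eqI[of _ _ "(i,k)"])
  qed
  then show ?thesis by (rule finite_subset) auto
qed

lemma vert_max_ex:
  assumes "finite P" shows "\<exists>E. max_vert P E \<and> x \<in> E"
proof -
  let ?A = "{E. vert_interval P E \<and> x \<in> E}"
  have "vert_interval P (vseg (fst x) (snd x) (snd x))"
    unfolding vert_alt vok_def by (intro exI[of _ "snd x"] exI[of _ "fst x"]) auto
  then have "vseg (fst x) (snd x) (snd x) \<in> ?A"
    by (auto simp: mem_vseg)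
  then have "?A \<noteq> {}" by blast
  from finite_has_maximal[OF vert_finite[OF assms] this]
  obtain m where m: "m \<in> ?A" "\<forall>b\<in>?A. m \<le> b \<longrightarrow> m = b" by blast
  then show ?thesis unfolding max_vert_def by blast
qed

lemma max_vert_unique:
  assumes "max_vert P E1" "max_vert P E2" "x \<in> E1" "x \<in> E2" shows "E1 = E2"
proof -
  have "vert_interval P (E1 \<union> E2)" using assms vert_union unfolding max_vert_def by blast
  then have "E1 \<union> E2 = E1" "E1 \<union> E2 = E2" using assms(1,2) unfolding max_vert_def by blast+
  then show ?thesis by blast
qed

lemma Vint_prop:
  assumes "finite P" shows "max_vert P (Vint P x) \<and> x \<in> Vint P x"
proof -
  have "\<exists>!E. max_vert P E \<and> x \<in> E"
    using vert_max_ex[OF assms, of x] max_vert_unique by blast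
  then show ?thesis unfolding Vint_def by (rule theI')
qed

lemma Vint_eq:
  assumes "finite P" "vert_interval P E" "x \<in> E" "y \<in> E"
  shows "Vint P x = Vint P y"
proof -
  let ?H = "Vint P x"
  have H: "max_vert P ?H" "x \<in> ?H" using Vint_prop[OF assms(1)] by auto
  have "vert_interval P (E \<union> ?H)" using vert_union[OF assms(2) _ assms(3) H(2)] H(1) unfolding max_vert_def by blast
  then have "E \<union> ?H = ?H" using H(1) unfolding max_vert_def by blast
  then have "y \<in> ?H" using assms(4) by blast
  then show ?thesis using max_vert_unique[OF H(1)] Vint_prop[OF assms(1), of y] by blast
qed

lemma Vint_col:
  assumes "finite P" "Vint P x = Vint P y"
  shows "fst x = fst y \<and> (\<forall>t. min (snd x) (snd y) \<le> t \<and> t < max (snd x) (snd y) \<longrightarrow> is_edge P {(fst x, t),(fst x, t+1)})"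
proof -
  have H: "max_vert P (Vint P x)" "x \<in> Vint P x" "y \<in> Vint P x" using Vint_prop[OF assms(1)] assms(2) by metis+
  then obtain i k j where 1: "i \<le> k" "Vint P x = vseg j i k" "vok P j i k" unfolding max_vert_def vert_alt by blast
  then have "fst x = j" "fst y = j" "i \<le> snd x" "snd x \<le> k" "i \<le> snd y" "snd y \<le> k" using H by (auto simp: mem_vseg)
  then show ?thesis using 1(3) unfolding vok_def
  proof (intro conjI allI impI)
    fix t assume "min (snd x) (snd y) \<le> t \<and> t < max (snd x) (snd y)"
    then have "i \<le> t \<and> t < k" using \<open>i \<le> snd x\<close> \<open>snd x \<le> k\<close> \<open>i \<le> snd y\<close> \<open>snd y \<le> k\<close> by linarith
    then show "is_edge P {(fst x, t),(fst x, t+1)}" using 1(3) \<open>fst x = j\<close> unfolding vok_def by auto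
  qed (use \<open>fst x = j\<close> \<open>fst y = j\<close> in auto)
qed





lemma cell_adj_sym: "cell_adj x y \<Longrightarrow> cell_adj y x"
  by (cases x; cases y) (auto simp: cell_adj_iff)

abbreviation Rel :: "pt set \<Rightarrow> pt \<Rightarrow> pt \<Rightarrow> bool" where
  "Rel X \<equiv> (\<lambda>x y. x \<in> X \<and> y \<in> X \<and> cell_adj x y)"

lemma Rel_mono: "A \<subseteq> B \<Longrightarrow> (Rel A)\<^sup>*\<^sup>* x y \<Longrightarrow> (Rel B)\<^sup>*\<^sup>* x y"
proof -
  assume "A \<subseteq> B"
  then have "Rel A \<le> Rel B" by auto
  then have "(Rel A)\<^sup>*\<^sup>* \<le> (Rel B)\<^sup>*\<^sup>*" by (rule rtranclp_mono)
  then show "(Rel A)\<^sup>*\<^sup>* x y \<Longrightarrow> (Rel B)\<^sup>*\<^sup>* x y" by (rule predicate2D)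
qed

lemma conn_union:
  assumes "cells_connected A" "cells_connected B" "z \<in> A" "z \<in> B"
  shows "cells_connected (A \<union> B)"
  unfolding cells_connected_def
proof (intro ballI)
  fix c d assume c: "c \<in> A \<union> B" and d: "d \<in> A \<union> B"
  have 1: "(Rel (A \<union> B))\<^sup>*\<^sup>* c z"
  proof (cases "c \<in> A")
    case True
    then have "(Rel A)\<^sup>*\<^sup>* c z" using assms(1,3) unfolding cells_connected_def by blast
    then show ?thesis by (rule Rel_mono[rotated]) auto
  next
    case False
    then have "(Rel B)\<^sup>*\<^sup>* c z" using c assms(2,4) unfolding cells_connected_def by blast
    then show ?thesis by (rule Rel_mono[rotated]) auto
  qed
  have 2: "(Rel (A \<union> B))\<^sup>*\<^sup>* z d"
  proof (cases "d \<in> A")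
    case True
    then have "(Rel A)\<^sup>*\<^sup>* z d" using assms(1,3) unfolding cells_connected_def by blast
    then show ?thesis by (rule Rel_mono[rotated]) auto
  next
    case False
    then have "(Rel B)\<^sup>*\<^sup>* z d" using d assms(2,4) unfolding cells_connected_def by blast
    then show ?thesis by (rule Rel_mono[rotated]) auto
  qed
  show "(Rel (A \<union> B))\<^sup>*\<^sup>* c d" using 1 2 by (rule rtranclp_trans)
qed

lemma conn_pair:
  assumes "cell_adj c c'" shows "cells_connected {c, c'}"
proof -
  have a: "Rel {c,c'} c c'" "Rel {c,c'} c' c" using assms cell_adj_sym by auto
  show ?thesis unfolding cells_connected_def
    using a by (auto intro: r_into_rtranclp)
qed

lemma finite_vertices: "finite H \<Longrightarrow> finite (vertices H)"
  by (auto simp: vertices_def cell_vertices_def)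

lemma lower_left_in:
  assumes "finite H" "H \<noteq> {}" shows "lower_left H \<in> H"
proof -
  let ?m = "Min (vertices H)"
  have fin: "finite (vertices H)" using assms(1) by (rule finite_vertices)
  have ne: "vertices H \<noteq> {}" using assms(2) by (auto simp: vertices_def cell_vertices_def)
  have "?m \<in> vertices H" using fin ne by (rule Min_in)
  then obtain c where c: "c \<in> H" "?m \<in> cell_vertices c" by (auto simp: vertices_def)
  have "c \<in> vertices H" using c(1) by (auto simp: vertices_def cell_vertices_def)
  then have "?m \<le> c" using fin by simp
  with c(2) have "?m = c" by (cases c) (auto simp: cell_vertices_def)
  then show ?thesis using c(1) by (simp add: lower_left_def)
qed

lemma hole_disjoint:
  assumes "hole P H1" "hole P H2" "x \<in> H1" "x \<in> H2" shows "H1 = H2"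
proof -
  have "cells_connected (H1 \<union> H2)" using assms by (intro conn_union[of _ _ x]) (auto simp: hole_def)
  then have "H1 \<union> H2 = H1" "H1 \<union> H2 = H2" using assms(1,2) unfolding hole_def
    by (metis Un_empty Un_upper1 Un_upper2 finite_UnI inf_sup_distrib2 sup_bot.right_neutral)+
  then show ?thesis by blast
qed

lemma hole_right:
  assumes "hole P H" shows "\<exists>c\<in>H. (fst c + 1, snd c) \<in> P"
proof -
  have fin: "finite H" and ne: "H \<noteq> {}" using assms by (auto simp: hole_def)
  have "Max (fst ` H) \<in> fst ` H" using fin ne by simp
  then obtain c where c: "c \<in> H" "fst c = Max (fst ` H)" by auto
  let ?c' = "(fst c + 1, snd c)"
  have nH: "?c' \<notin> H"
  proof
    assume "?c' \<in> H"
    then have "fst ?c' \<in> fst ` H" by (rule imageI)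
    then have "fst ?c' \<le> Max (fst ` H)" using fin by (intro Max_ge) auto
    then show False using c(2) by simp
  qed
  show ?thesis
  proof (rule ccontr)
    assume "\<not> ?thesis"
    then have nP: "?c' \<notin> P" using c(1) by blast
    have adj: "cell_adj c ?c'" by (cases c) (simp add: cell_adj_iff)
    have "cells_connected (H \<union> {c, ?c'})"
      using assms conn_pair[OF adj] c(1) by (intro conn_union[of _ _ c]) (auto simp: hole_def)
    moreover have "H \<subseteq> H \<union> {c, ?c'}" "finite (H \<union> {c, ?c'})" "H \<union> {c, ?c'} \<noteq> {}"
      "(H \<union> {c, ?c'}) \<inter> P = {}" using fin c(1) nP assms by (auto simp: hole_def)
    ultimately have "H \<union> {c, ?c'} = H" using assms unfolding hole_def by blast
    then show False using nH by blast
  qed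
qed

lemma finite_holes:
  assumes "finite P" shows "finite {H. hole P H}"
proof -
  define f where "f H = (SOME c. c \<in> H \<and> (fst c + 1, snd c) \<in> P)" for H
  have f: "f H \<in> H \<and> (fst (f H) + 1, snd (f H)) \<in> P" if "hole P H" for H
    unfolding f_def using hole_right[OF that] by (rule someI2_bex) auto
  show ?thesis
  proof (rule inj_on_finite[of f])
    show "inj_on f {H. hole P H}"
      by (rule inj_onI) (use f hole_disjoint in fastforce)
    show "f ` {H. hole P H} \<subseteq> (\<lambda>p. (fst p - 1, snd p)) ` P"
    proof
      fix y assume "y \<in> f ` {H. hole P H}"
      then obtain H where "hole P H" "y = f H" by auto
      then have "(fst y + 1, snd y) \<in> P" using f by auto
      then show "y \<in> (\<lambda>p. (fst p - 1, snd p)) ` P" by (intro image_eqI[of _ _ "(fst y + 1, snd y)"]) auto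
    qed
    show "finite ((\<lambda>p. (fst p - 1, snd p)) ` P)" using assms by simp
  qed
qed

lemma lookup_phi_exp:
  assumes "finite P"
  shows "Poly_Mapping.lookup (phi_exp P a) (hvar X) = (if Hint P a = X then 1 else 0)"
    "Poly_Mapping.lookup (phi_exp P a) (vvar X) = (if Vint P a = X then 1 else 0)"
    "Poly_Mapping.lookup (phi_exp P a) (wvar H) = (if hole P H \<and> a \<in> F_set P H then 1 else 0)"
proof -
  let ?S = "{H. hole P H \<and> a \<in> F_set P H}"
  have fS: "finite ?S" by (rule finite_subset[OF _ finite_holes[OF assms]]) auto
  show "Poly_Mapping.lookup (phi_exp P a) (hvar X) = (if Hint P a = X then 1 else 0)"
    "Poly_Mapping.lookup (phi_exp P a) (vvar X) = (if Vint P a = X then 1 else 0)"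
    by (auto simp: phi_exp_def lookup_add lookup_sum lookup_single)
  have "Poly_Mapping.lookup (phi_exp P a) (wvar H) = (\<Sum>H'\<in>?S. if H' = H then 1 else 0)"
    by (auto simp: phi_exp_def lookup_add lookup_sum lookup_single when_def intro!: sum.cong)
  also have "\<dots> = (if hole P H \<and> a \<in> F_set P H then 1 else 0)"
    using fS by (simp add: sum.delta')
  finally show "Poly_Mapping.lookup (phi_exp P a) (wvar H) = (if hole P H \<and> a \<in> F_set P H then 1 else 0)" .
qed



abbreviation sm :: "pt \<Rightarrow> pt \<Rightarrow>\<^sub>0 nat" where "sm a \<equiv> Poly_Mapping.single a 1"

lemma lookup_map_mult: "Poly_Mapping.lookup (Poly_Mapping.map (\<lambda>e. n * e) p) k = (n::nat) * Poly_Mapping.lookup p k"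
  by (simp add: map.rep_eq when_def)

lemma lookup_phi_mon:
  "Poly_Mapping.lookup (phi_mon P m) t = (\<Sum>a\<in>Poly_Mapping.keys m. Poly_Mapping.lookup m a * Poly_Mapping.lookup (phi_exp P a) t)"
  by (simp add: phi_mon_def lookup_sum lookup_map_mult)

lemma lookup_sm2: "Poly_Mapping.lookup (sm a + sm b) x = (if x = a then 1 else 0) + (if x = b then 1 else 0)"
  unfolding lookup_add lookup_single when_def by auto

lemma keys_sm2: "Poly_Mapping.keys (sm a + sm b) = {a, b}"
  by (rule set_eqI) (simp only: in_keys_iff lookup_sm2, auto)

lemma phi_mon_sm2: "phi_mon P (sm a + sm b) = phi_exp P a + phi_exp P b"
proof (rule poly_mapping_eqI)
  fix t
  show "Poly_Mapping.lookup (phi_mon P (sm a + sm b)) t = Poly_Mapping.lookup (phi_exp P a + phi_exp P b) t"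
    unfolding lookup_phi_mon keys_sm2 lookup_sm2 by (cases "a = b") (auto simp: lookup_add)
qed

lemma mdeg_sm2: "mdeg (sm a + sm b) = 2"
  unfolding mdeg_def keys_sm2 lookup_sm2 by (cases "a = b") auto

lemma mdeg2:
  assumes "mdeg m = 2" shows "\<exists>a b. m = sm a + sm b"
proof -
  let ?K = "Poly_Mapping.keys m" and ?l = "Poly_Mapping.lookup m"
  have s: "(\<Sum>a\<in>?K. ?l a) = 2" using assms by (simp add: mdeg_def)
  then have "?K \<noteq> {}" by auto
  then obtain a where a: "a \<in> ?K" by blast
  have la: "?l a \<ge> 1" using a by (simp add: in_keys_iff)
  have s2: "?l a + (\<Sum>x\<in>?K - {a}. ?l x) = 2" using s a by (simp add: sum.remove)
  show ?thesis
  proof (cases "?l a = 2")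
    case True
    then have "(\<Sum>x\<in>?K - {a}. ?l x) = 0" using s2 by simp
    then have "\<forall>x\<in>?K - {a}. ?l x = 0" by simp
    then have K: "\<And>x. x \<noteq> a \<Longrightarrow> ?l x = 0" by (auto simp: in_keys_iff)
    have "m = sm a + sm a"
      by (rule poly_mapping_eqI) (unfold lookup_sm2, use K True in auto)
    then show ?thesis by blast
  next
    case False
    then have la1: "?l a = 1" using s2 la by linarith
    then have s3: "(\<Sum>x\<in>?K - {a}. ?l x) = 1" using s2 by simp
    then have "?K - {a} \<noteq> {}" by (metis sum.empty zero_neq_one)
    then obtain b where b: "b \<in> ?K" "b \<noteq> a" by blast
    have lb: "?l b \<ge> 1" using b by (simp add: in_keys_iff)
    have "?l b + (\<Sum>x\<in>?K - {a} - {b}. ?l x) = 1" using s3 b by (simp add: sum.remove)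
    then have lb1: "?l b = 1" and "(\<Sum>x\<in>?K - {a} - {b}. ?l x) = 0" using lb by linarith+
    then have "\<forall>x\<in>?K - {a} - {b}. ?l x = 0" by simp
    then have K: "\<And>x. x \<noteq> a \<Longrightarrow> x \<noteq> b \<Longrightarrow> ?l x = 0" by (auto simp: in_keys_iff)
    have "m = sm a + sm b"
      by (rule poly_mapping_eqI) (unfold lookup_sm2, use K la1 lb1 b in auto)
    then show ?thesis by blast
  qed
qed

lemma phi_alt:
  assumes "finite S" "Poly_Mapping.keys p \<subseteq> S"
  shows "phi P p = (\<Sum>m\<in>S. Poly_Mapping.single (phi_mon P m) (Poly_Mapping.lookup p m))"
  unfolding phi_def
  by (rule sum.mono_neutral_left) (use assms in \<open>auto simp: in_keys_iff\<close>)

lemma phi_diff: "phi P (p - q) = phi P p - phi P q"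
proof -
  let ?S = "Poly_Mapping.keys p \<union> Poly_Mapping.keys q"
  have k: "Poly_Mapping.keys (p - q) \<subseteq> ?S" by (auto simp: in_keys_iff lookup_minus)
  have "phi P (p - q) = (\<Sum>m\<in>?S. Poly_Mapping.single (phi_mon P m) (Poly_Mapping.lookup (p - q) m))"
    by (rule phi_alt) (use k in auto)
  also have "\<dots> = (\<Sum>m\<in>?S. Poly_Mapping.single (phi_mon P m) (Poly_Mapping.lookup p m))
       - (\<Sum>m\<in>?S. Poly_Mapping.single (phi_mon P m) (Poly_Mapping.lookup q m))"
    by (simp add: lookup_minus single_diff sum_subtractf)
  also have "\<dots> = phi P p - phi P q"
    by (subst (1 2) phi_alt[of ?S]) auto
  finally show ?thesis .
qed

lemma phi_single: "phi P (Poly_Mapping.single m c) = Poly_Mapping.single (phi_mon P m) c"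
  by (cases "c = 0") (simp_all add: phi_def)

lemma lookup_phi:
  "Poly_Mapping.lookup (phi P p) t = (\<Sum>m\<in>Poly_Mapping.keys p. if phi_mon P m = t then Poly_Mapping.lookup p m else 0)"
  by (simp add: phi_def lookup_sum lookup_single when_def)

lemma ideal_gen_sub:
  assumes "G \<subseteq> ideal_gen R G'" shows "ideal_gen R G \<subseteq> ideal_gen R G'"
proof
  fix x assume "x \<in> ideal_gen R G"
  then show "x \<in> ideal_gen R G'"
    by (induction rule: ideal_gen.induct) (use assms in \<open>auto intro: ideal_gen.intros\<close>)
qed

lemma const_polyring: "Poly_Mapping.single 0 c \<in> polyring V"
  by (cases "c = 0") (auto simp: polyring_def)

lemma var_mult: "(var a * var b :: 'k::comm_ring_1 poly2) = Poly_Mapping.single (sm a + sm b) 1"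
  by (simp add: var_def mult_single)




lemma inner_cell:
  assumes "inner_interval P (i,j) (k,l)" "i \<le> a" "a < k" "j \<le> b" "b < l"
  shows "(a,b) \<in> P"
proof -
  have "cell_vertices (a,b) \<subseteq> {p. fst (i,j) \<le> fst p \<and> fst p \<le> fst (k,l) \<and> snd (i,j) \<le> snd p \<and> snd p \<le> snd (k,l)}"
    using assms(2-5) by (auto simp: mem_cv)
  then show ?thesis using assms(1) unfolding inner_interval_def by blast
qed

lemma inner_corners:
  assumes "inner_interval P (i,j) (k,l)"
  shows "(i,j) \<in> vertices P" "(k,l) \<in> vertices P" "(i,l) \<in> vertices P" "(k,j) \<in> vertices P"
proof -
  have ik: "i < k" "j < l" using assms by (auto simp: inner_interval_def)
  have c: "(i,j) \<in> P" "(k-1,j) \<in> P" "(i,l-1) \<in> P" "(k-1,l-1) \<in> P"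
    using ik by (auto intro!: inner_cell[OF assms])
  show "(i,j) \<in> vertices P" using c(1) by (auto simp: vertices_def mem_cv intro!: bexI[of _ "(i,j)"])
  show "(k,l) \<in> vertices P" using c(4) ik by (auto simp: vertices_def mem_cv intro!: bexI[of _ "(k-1,l-1)"])
  show "(i,l) \<in> vertices P" using c(3) ik by (auto simp: vertices_def mem_cv intro!: bexI[of _ "(i,l-1)"])
  show "(k,j) \<in> vertices P" using c(2) ik by (auto simp: vertices_def mem_cv intro!: bexI[of _ "(k-1,j)"])
qed

lemma inner_H:
  assumes "finite P" "inner_interval P (i,j) (k,l)"
  shows "Hint P (i,j) = Hint P (k,j)" "Hint P (i,l) = Hint P (k,l)"
    "Vint P (i,j) = Vint P (i,l)" "Vint P (k,j) = Vint P (k,l)"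
proof -
  have ik: "i < k" "j < l" using assms by (auto simp: inner_interval_def)
  have "hok P j i k" unfolding hok_def
  proof (intro allI impI)
    fix t assume t: "i \<le> t \<and> t < k"
    then have "(t,j) \<in> P" using ik by (intro inner_cell[OF assms(2)]) auto
    moreover have "{(t, j), (t + 1, j)} \<in> cell_edges (t,j)" by (simp add: cell_edges_def)
    ultimately show "is_edge P {(t, j), (t + 1, j)}" unfolding is_edge_def by blast
  qed
  then have "horiz_interval P (hseg j i k)" unfolding horiz_alt using ik(1) less_imp_le by blast
  then show "Hint P (i,j) = Hint P (k,j)" using ik by (intro Hint_eq[OF assms(1)]) (auto simp: mem_hseg)
  have "hok P l i k" unfolding hok_def
  proof (intro allI impI)
    fix t assume t: "i \<le> t \<and> t < k"
    then have "(t,l-1) \<in> P" using ik by (intro inner_cell[OF assms(2)]) auto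
    moreover have "{(t, l), (t + 1, l)} \<in> cell_edges (t,l-1)" using ik by (simp add: cell_edges_def)
    ultimately show "is_edge P {(t, l), (t + 1, l)}" unfolding is_edge_def by blast
  qed
  then have "horiz_interval P (hseg l i k)" unfolding horiz_alt using ik(1) less_imp_le by blast
  then show "Hint P (i,l) = Hint P (k,l)" using ik by (intro Hint_eq[OF assms(1)]) (auto simp: mem_hseg)
  have "vok P i j l" unfolding vok_def
  proof (intro allI impI)
    fix t assume t: "j \<le> t \<and> t < l"
    then have "(i,t) \<in> P" using ik by (intro inner_cell[OF assms(2)]) auto
    moreover have "{(i, t), (i, t + 1)} \<in> cell_edges (i,t)" by (simp add: cell_edges_def)
    ultimately show "is_edge P {(i, t), (i, t + 1)}" unfolding is_edge_def by blast
  qed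
  then have "vert_interval P (vseg i j l)" unfolding vert_alt using ik(2) less_imp_le by blast
  then show "Vint P (i,j) = Vint P (i,l)" using ik by (intro Vint_eq[OF assms(1)]) (auto simp: mem_vseg)
  have "vok P k j l" unfolding vok_def
  proof (intro allI impI)
    fix t assume t: "j \<le> t \<and> t < l"
    then have "(k-1,t) \<in> P" using ik by (intro inner_cell[OF assms(2)]) auto
    moreover have "{(k, t), (k, t + 1)} \<in> cell_edges (k-1,t)" using ik by (simp add: cell_edges_def)
    ultimately show "is_edge P {(k, t), (k, t + 1)}" unfolding is_edge_def by blast
  qed
  then have "vert_interval P (vseg k j l)" unfolding vert_alt using ik(2) less_imp_le by blast
  then show "Vint P (k,j) = Vint P (k,l)" using ik by (intro Vint_eq[OF assms(1)]) (auto simp: mem_vseg)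
qed

lemma inner_w:
  assumes "inner_interval P (i,j) (k,l)" "hole P H"
  shows "(if (i,j) \<in> F_set P H then 1 else 0) + (if (k,l) \<in> F_set P H then 1 else 0)
       = (if (i,l) \<in> F_set P H then 1 else (0::nat)) + (if (k,j) \<in> F_set P H then 1 else 0)"
proof -
  obtain e1 e2 where e: "lower_left H = (e1,e2)" by (cases "lower_left H")
  have "lower_left H \<in> H" using assms(2) by (intro lower_left_in) (auto simp: hole_def)
  then have eP: "(e1,e2) \<notin> P" using assms(2) e by (auto simp: hole_def)
  have ik: "i < k" "j < l" using assms by (auto simp: inner_interval_def)
  have nin: "\<not> (i \<le> e1 \<and> e1 < k \<and> j \<le> e2 \<and> e2 < l)"
    using eP inner_cell[OF assms(1)] by blast
  have V: "(i,j) \<in> vertices P" "(k,l) \<in> vertices P" "(i,l) \<in> vertices P" "(k,j) \<in> vertices P"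
    using inner_corners[OF assms(1)] by auto
  have F: "(i,j) \<in> F_set P H \<longleftrightarrow> i \<le> e1 \<and> j \<le> e2" "(k,l) \<in> F_set P H \<longleftrightarrow> k \<le> e1 \<and> l \<le> e2"
    "(i,l) \<in> F_set P H \<longleftrightarrow> i \<le> e1 \<and> l \<le> e2" "(k,j) \<in> F_set P H \<longleftrightarrow> k \<le> e1 \<and> j \<le> e2"
    unfolding F_set_def e using V by simp_all
  show ?thesis unfolding F using nin ik by (simp split: if_split) linarith?
qed

lemma inner_phi_exp:
  assumes "finite P" "inner_interval P (i,j) (k,l)"
  shows "phi_exp P (i,j) + phi_exp P (k,l) = phi_exp P (i,l) + phi_exp P (k,j)"
proof (rule poly_mapping_eqI)
  fix t
  note H = inner_H[OF assms]
  show "Poly_Mapping.lookup (phi_exp P (i,j) + phi_exp P (k,l)) t = Poly_Mapping.lookup (phi_exp P (i,l) + phi_exp P (k,j)) t"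
  proof (cases t)
    case (hvar X) then show ?thesis using H by (simp add: lookup_add lookup_phi_exp[OF assms(1)])
  next
    case (vvar X) then show ?thesis using H by (simp add: lookup_add lookup_phi_exp[OF assms(1)])
  next
    case (wvar X)
    show ?thesis
    proof (cases "hole P X")
      case True
      then show ?thesis using inner_w[OF assms(2) True] wvar by (simp add: lookup_add lookup_phi_exp[OF assms(1)])
    next
      case False
      then show ?thesis using wvar by (simp add: lookup_add lookup_phi_exp[OF assms(1)])
    qed
  qed
qed

lemma minor_in_J:
  assumes "finite P" "inner_interval P lo hi"
  shows "(var lo * var hi - var (fst lo, snd hi) * var (fst hi, snd lo) :: 'k::comm_ring_1 poly2) \<in> graded_part 2 (toric_ideal P)"
proof -
  obtain i j where lo: "lo = (i,j)" by (cases lo)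
  obtain k l where hi: "hi = (k,l)" by (cases hi)
  have inn: "inner_interval P (i,j) (k,l)" using assms(2) lo hi by simp
  let ?m1 = "sm (i,j) + sm (k,l)" and ?m2 = "sm (i,l) + sm (k,j)"
  have eq: "(var lo * var hi - var (fst lo, snd hi) * var (fst hi, snd lo) :: 'k poly2)
      = Poly_Mapping.single ?m1 1 - Poly_Mapping.single ?m2 1"
    by (simp add: lo hi var_mult)
  have ks: "Poly_Mapping.keys (Poly_Mapping.single ?m1 1 - Poly_Mapping.single ?m2 (1::'k)) \<subseteq> {?m1, ?m2}"
    by (rule order_trans[OF keys_diff]) auto
  have V: "(i,j) \<in> vertices P" "(k,l) \<in> vertices P" "(i,l) \<in> vertices P" "(k,j) \<in> vertices P"
    using inner_corners[OF inn] by auto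
  have pr: "Poly_Mapping.single ?m1 1 - Poly_Mapping.single ?m2 (1::'k) \<in> polyring (vertices P)"
    unfolding polyring_def
  proof (intro CollectI ballI)
    fix m assume "m \<in> Poly_Mapping.keys (Poly_Mapping.single ?m1 1 - Poly_Mapping.single ?m2 (1::'k))"
    then have "m = ?m1 \<or> m = ?m2" using ks by blast
    then show "Poly_Mapping.keys m \<subseteq> vertices P"
      using V keys_sm2[of "(i,j)" "(k,l)"] keys_sm2[of "(i,l)" "(k,j)"] by auto
  qed
  have ph: "phi P (Poly_Mapping.single ?m1 1 - Poly_Mapping.single ?m2 (1::'k)) = 0"
    unfolding phi_diff phi_single phi_mon_sm2 inner_phi_exp[OF assms(1) inn] by simp
  have hd: "homogeneous_of_degree 2 (Poly_Mapping.single ?m1 1 - Poly_Mapping.single ?m2 (1::'k))"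
    unfolding homogeneous_of_degree_def
  proof
    fix m assume "m \<in> Poly_Mapping.keys (Poly_Mapping.single ?m1 1 - Poly_Mapping.single ?m2 (1::'k))"
    then have "m = ?m1 \<or> m = ?m2" using ks by blast
    then show "mdeg m = 2" using mdeg_sm2[of "(i,j)" "(k,l)"] mdeg_sm2[of "(i,l)" "(k,j)"] by auto
  qed
  show ?thesis unfolding eq graded_part_def toric_ideal_def using pr ph hd by simp
qed




lemma rtranclp_sym:
  assumes "\<And>x y. r x y \<Longrightarrow> r y x" "r\<^sup>*\<^sup>* a b" shows "r\<^sup>*\<^sup>* b a"
  using assms(2)
proof (induction rule: rtranclp_induct)
  case base then show ?case by simp
next
  case (step y z)
  then show ?case using assms(1) by (meson converse_rtranclp_into_rtranclp)
qed

lemma step_in_rect: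
  assumes hb: "\<forall>t. i \<le> t \<and> t < k \<longrightarrow> is_edge P {(t, j), (t + 1, j)}"
    and ht: "\<forall>t. i \<le> t \<and> t < k \<longrightarrow> is_edge P {(t, l), (t + 1, l)}"
    and vl: "\<forall>t. j \<le> t \<and> t < l \<longrightarrow> is_edge P {(i, t), (i, t + 1)}"
    and vr: "\<forall>t. j \<le> t \<and> t < l \<longrightarrow> is_edge P {(k, t), (k, t + 1)}"
    and y: "i \<le> y1" "y1 < k" "j \<le> y2" "y2 < l" and nP: "(y1,y2) \<notin> P" "(z1,z2) \<notin> P"
    and adj: "cell_adj (y1,y2) (z1,z2)"
  shows "i \<le> z1 \<and> z1 < k \<and> j \<le> z2 \<and> z2 < l"
proof -
  consider "z1 = y1+1 \<and> z2 = y2" | "y1 = z1+1 \<and> z2 = y2" | "z1 = y1 \<and> z2 = y2+1" | "z1 = y1 \<and> y2 = z2+1"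
    using adj by (auto simp: cell_adj_iff)
  then show ?thesis
  proof cases
    case 1
    show ?thesis
    proof (rule ccontr)
      assume "\<not> ?thesis"
      then have "y1 + 1 = k" using 1 y by auto
      then have "is_edge P {(k, y2), (k, y2 + 1)}" using vr y by auto
      then have "(k,y2) \<in> P \<or> (k \<ge> 1 \<and> (k-1,y2) \<in> P)" by (rule is_edge_v)
      then show False using nP 1 \<open>y1 + 1 = k\<close> by auto
    qed
  next
    case 2
    show ?thesis
    proof (rule ccontr)
      assume "\<not> ?thesis"
      then have "y1 = i" using 2 y by auto
      then have "is_edge P {(i, y2), (i, y2 + 1)}" using vl y by auto
      then have "(i,y2) \<in> P \<or> (i \<ge> 1 \<and> (i-1,y2) \<in> P)" by (rule is_edge_v)
      then show False using nP 2 \<open>y1 = i\<close> by auto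
    qed
  next
    case 3
    show ?thesis
    proof (rule ccontr)
      assume "\<not> ?thesis"
      then have "y2 + 1 = l" using 3 y by auto
      then have "is_edge P {(y1, l), (y1 + 1, l)}" using ht y by auto
      then have "(y1,l) \<in> P \<or> (l \<ge> 1 \<and> (y1,l-1) \<in> P)" by (rule is_edge_h)
      then show False using nP 3 \<open>y2 + 1 = l\<close> by auto
    qed
  next
    case 4
    show ?thesis
    proof (rule ccontr)
      assume "\<not> ?thesis"
      then have "y2 = j" using 4 y by auto
      then have "is_edge P {(y1, j), (y1 + 1, j)}" using hb y by auto
      then have "(y1,j) \<in> P \<or> (j \<ge> 1 \<and> (y1,j-1) \<in> P)" by (rule is_edge_h)
      then show False using nP 4 \<open>y2 = j\<close> by auto
    qed
  qed
qed

lemma geo: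
  assumes fin: "finite P" and ik: "i < k" "j < l"
    and V: "(i,j) \<in> vertices P" "(k,l) \<in> vertices P" "(i,l) \<in> vertices P" "(k,j) \<in> vertices P"
    and eq: "phi_exp P (i,j) + phi_exp P (k,l) = phi_exp P (i,l) + phi_exp P (k,j)"
  shows "inner_interval P (i,j) (k,l)"
proof -
  have L: "\<And>t. Poly_Mapping.lookup (phi_exp P (i,j)) t + Poly_Mapping.lookup (phi_exp P (k,l)) t
     = Poly_Mapping.lookup (phi_exp P (i,l)) t + Poly_Mapping.lookup (phi_exp P (k,j)) t"
    by (metis eq lookup_add)
  have ne1: "Hint P (k,l) \<noteq> Hint P (i,j)" "Hint P (i,l) \<noteq> Hint P (i,j)"
    "Hint P (i,l) \<noteq> Hint P (k,j)" "Hint P (k,l) \<noteq> Hint P (k,j)"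
    using Hint_row[OF fin, of "(k,l)" "(i,j)"] Hint_row[OF fin, of "(i,l)" "(i,j)"]
      Hint_row[OF fin, of "(i,l)" "(k,j)"] Hint_row[OF fin, of "(k,l)" "(k,j)"] ik by auto
  have hb: "Hint P (i,j) = Hint P (k,j)"
    using L[of "hvar (Hint P (i,j))"] ne1 by (auto simp: lookup_phi_exp[OF fin] split: if_splits)
  have ht: "Hint P (i,l) = Hint P (k,l)"
    using L[of "hvar (Hint P (k,l))"] ne1 by (auto simp: lookup_phi_exp[OF fin] split: if_splits)
  have ne2: "Vint P (k,l) \<noteq> Vint P (i,j)" "Vint P (k,j) \<noteq> Vint P (i,j)"
    "Vint P (i,l) \<noteq> Vint P (k,l)" "Vint P (k,j) \<noteq> Vint P (i,l)"
    using Vint_col[OF fin, of "(k,l)" "(i,j)"] Vint_col[OF fin, of "(k,j)" "(i,j)"]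
      Vint_col[OF fin, of "(i,l)" "(k,l)"] Vint_col[OF fin, of "(k,j)" "(i,l)"] ik by auto
  have vl: "Vint P (i,j) = Vint P (i,l)"
    using L[of "vvar (Vint P (i,j))"] ne2 by (auto simp: lookup_phi_exp[OF fin] split: if_splits)
  have vr: "Vint P (k,j) = Vint P (k,l)"
    using L[of "vvar (Vint P (k,l))"] ne2 by (auto simp: lookup_phi_exp[OF fin] split: if_splits)
  have Eb: "\<forall>t. i \<le> t \<and> t < k \<longrightarrow> is_edge P {(t, j), (t + 1, j)}"
    using Hint_row[OF fin hb] ik by auto
  have Et: "\<forall>t. i \<le> t \<and> t < k \<longrightarrow> is_edge P {(t, l), (t + 1, l)}"
    using Hint_row[OF fin ht] ik by auto
  have El: "\<forall>t. j \<le> t \<and> t < l \<longrightarrow> is_edge P {(i, t), (i, t + 1)}"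
    using Vint_col[OF fin vl] ik by auto
  have Er: "\<forall>t. j \<le> t \<and> t < l \<longrightarrow> is_edge P {(k, t), (k, t + 1)}"
    using Vint_col[OF fin vr] ik by auto
  show ?thesis
  proof (rule ccontr)
    assume "\<not> ?thesis"
    then obtain q where q: "cell_vertices q \<subseteq> {p. i \<le> fst p \<and> fst p \<le> k \<and> j \<le> snd p \<and> snd p \<le> l}" "q \<notin> P"
      using ik unfolding inner_interval_def by auto
    obtain q1 q2 where qq: "q = (q1,q2)" by (cases q)
    have qR: "i \<le> q1" "q1 < k" "j \<le> q2" "q2 < l" using q(1) unfolding qq cell_vertices_def by auto
    define Rn where "Rn = (\<lambda>x y. x \<notin> P \<and> y \<notin> P \<and> cell_adj x y)"
    define C where "C = {x. Rn\<^sup>*\<^sup>* q x}"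
    define Rect where "Rect = {x::pt. i \<le> fst x \<and> fst x < k \<and> j \<le> snd x \<and> snd x < l}"
    have inR: "x \<in> Rect \<and> x \<notin> P" if "Rn\<^sup>*\<^sup>* q x" for x
      using that
    proof (induction rule: rtranclp_induct)
      case base then show ?case using qR q(2) qq by (simp add: Rect_def)
    next
      case (step y z)
      obtain y1 y2 where yy: "y = (y1,y2)" by (cases y)
      obtain z1 z2 where zz: "z = (z1,z2)" by (cases z)
      have "i \<le> z1 \<and> z1 < k \<and> j \<le> z2 \<and> z2 < l"
        using step_in_rect[OF Eb Et El Er, of y1 y2 z1 z2] step unfolding Rn_def Rect_def yy zz by auto
      then show ?case using step unfolding Rn_def Rect_def zz by auto
    qed
    have CR: "C \<subseteq> Rect" and CP: "C \<inter> P = {}" using inR unfolding C_def by auto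
    have qC: "q \<in> C" unfolding C_def by simp
    have finR: "finite Rect"
      by (rule finite_subset[of _ "{i..<k} \<times> {j..<l}"]) (auto simp: Rect_def)
    have finC: "finite C" using finite_subset[OF CR finR] .
    have symRn: "\<And>x y. Rn x y \<Longrightarrow> Rn y x" unfolding Rn_def using cell_adj_sym by blast
    have toC: "(Rel C)\<^sup>*\<^sup>* q x" if "Rn\<^sup>*\<^sup>* q x" for x
      using that
    proof (induction rule: rtranclp_induct)
      case base then show ?case by simp
    next
      case (step y z)
      then have "y \<in> C" "z \<in> C" unfolding C_def by (auto intro: rtranclp.rtrancl_into_rtrancl)
      then have "Rel C y z" using step(2) unfolding Rn_def by auto
      then show ?case using step(3) by (rule rtranclp.rtrancl_into_rtrancl[rotated])
    qed
    have symRC: "\<And>x y. Rel C x y \<Longrightarrow> Rel C y x" using cell_adj_sym by blast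
    have connC: "cells_connected C"
      unfolding cells_connected_def
    proof (intro ballI)
      fix c d assume "c \<in> C" "d \<in> C"
      then have h: "(Rel C)\<^sup>*\<^sup>* q c" "(Rel C)\<^sup>*\<^sup>* q d" using toC unfolding C_def by auto
      have "(Rel C)\<^sup>*\<^sup>* c q" by (rule rtranclp_sym[of "Rel C" q c, OF symRC h(1)])
      then show "(Rel C)\<^sup>*\<^sup>* c d" using h(2) by (rule rtranclp_trans)
    qed
    have holeC: "hole P C"
      unfolding hole_def
    proof (intro conjI allI impI)
      show "finite C" using finC .
      show "C \<noteq> {}" using qC by blast
      show "C \<inter> P = {}" using CP .
      show "cells_connected C" using connC .
      fix H' assume H': "C \<subseteq> H' \<and> finite H' \<and> H' \<noteq> {} \<and> H' \<inter> P = {} \<and> cells_connected H'"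
      have "H' \<subseteq> C"
      proof
        fix y assume "y \<in> H'"
        then have "(Rel H')\<^sup>*\<^sup>* q y" using H' qC unfolding cells_connected_def by blast
        moreover have "Rel H' \<le> Rn" using H' unfolding Rn_def by blast
        ultimately have "Rn\<^sup>*\<^sup>* q y" using predicate2D[OF rtranclp_mono[of "Rel H'" Rn]] by blast
        then show "y \<in> C" unfolding C_def by simp
      qed
      then show "H' = C" using H' by blast
    qed
    obtain e1 e2 where e: "lower_left C = (e1,e2)" by (cases "lower_left C")
    have "lower_left C \<in> C" using finC qC by (intro lower_left_in) auto
    then have eR: "i \<le> e1" "e1 < k" "j \<le> e2" "e2 < l" using CR e unfolding Rect_def by auto
    have F: "(i,j) \<in> F_set P C" "(k,l) \<notin> F_set P C" "(i,l) \<notin> F_set P C" "(k,j) \<notin> F_set P C"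
      unfolding F_set_def e using V eR by auto
    show False using L[of "wvar C"] F holeC by (simp add: lookup_phi_exp[OF fin])
  qed
qed




lemma pair_eq:
  assumes h: "\<And>X. (if A = X then 1 else 0) + (if B = X then 1 else 0) = (if C = X then 1 else 0) + (if D = X then (1::nat) else 0)"
  shows "(A = C \<and> B = D) \<or> (A = D \<and> B = C)"
proof -
  have hA: "(if C = A then 1 else 0) + (if D = A then (1::nat) else 0) \<ge> 1" using h[of A] by simp
  show ?thesis
  proof (cases "C = A")
    case True
    then show ?thesis using h[of B] by (cases "A = B") (simp_all split: if_splits)
  next
    case False
    then have "D = A" using hA by (simp split: if_splits)
    then show ?thesis using h[of B] by (cases "A = B") (simp_all split: if_splits)
  qed
qed

lemma core:
  assumes fin: "finite P" and ab: "a1 < b1" "a2 \<noteq> b2"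
    and V: "(a1,a2) \<in> vertices P" "(b1,b2) \<in> vertices P" "(a1,b2) \<in> vertices P" "(b1,a2) \<in> vertices P"
    and eq: "phi_exp P (a1,a2) + phi_exp P (b1,b2) = phi_exp P (a1,b2) + phi_exp P (b1,a2)"
  shows "Poly_Mapping.single (sm (a1,a2) + sm (b1,b2)) c - Poly_Mapping.single (sm (a1,b2) + sm (b1,a2)) (c::'k::comm_ring_1)
      \<in> ideal_gen (polyring (vertices P)) (inner_minors P)"
proof (cases "a2 < b2")
  case True
  have inn: "inner_interval P (a1,a2) (b1,b2)" using geo[OF fin ab(1) True V eq] .
  have g: "(var (a1,a2) * var (b1,b2) - var (a1,b2) * var (b1,a2) :: 'k poly2) \<in> inner_minors P"
    unfolding inner_minors_def
    by (rule CollectI, rule exI[of _ "(a1,a2)"], rule exI[of _ "(b1,b2)"]) (simp add: inn)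
  have "Poly_Mapping.single 0 c * (var (a1,a2) * var (b1,b2) - var (a1,b2) * var (b1,a2))
     \<in> ideal_gen (polyring (vertices P)) (inner_minors P)"
    by (rule ideal_gen.mult[OF const_polyring ideal_gen.gen[OF g]])
  moreover have "Poly_Mapping.single 0 c * (var (a1,a2) * var (b1,b2) - var (a1,b2) * var (b1,a2))
     = Poly_Mapping.single (sm (a1,a2) + sm (b1,b2)) c - Poly_Mapping.single (sm (a1,b2) + sm (b1,a2)) c"
    unfolding var_mult right_diff_distrib mult_single by simp
  ultimately show ?thesis by simp
next
  case False
  then have lt: "b2 < a2" using ab(2) by simp
  have eq': "phi_exp P (a1,b2) + phi_exp P (b1,a2) = phi_exp P (a1,a2) + phi_exp P (b1,b2)" using eq by simp
  have inn: "inner_interval P (a1,b2) (b1,a2)" using geo[OF fin ab(1) lt V(3,4,1,2) eq'] .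
  have g: "(var (a1,b2) * var (b1,a2) - var (a1,a2) * var (b1,b2) :: 'k poly2) \<in> inner_minors P"
    unfolding inner_minors_def
    by (rule CollectI, rule exI[of _ "(a1,b2)"], rule exI[of _ "(b1,a2)"]) (simp add: inn)
  have "Poly_Mapping.single 0 (- c) * (var (a1,b2) * var (b1,a2) - var (a1,a2) * var (b1,b2))
     \<in> ideal_gen (polyring (vertices P)) (inner_minors P)"
    by (rule ideal_gen.mult[OF const_polyring ideal_gen.gen[OF g]])
  moreover have "Poly_Mapping.single 0 (- c) * (var (a1,b2) * var (b1,a2) - var (a1,a2) * var (b1,b2))
     = Poly_Mapping.single (sm (a1,a2) + sm (b1,b2)) c - Poly_Mapping.single (sm (a1,b2) + sm (b1,a2)) c"
    unfolding var_mult right_diff_distrib mult_single by (simp add: single_uminus)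
  ultimately show ?thesis by simp
qed




lemma bin:
  assumes fin: "finite P" and k0: "Poly_Mapping.keys m0 \<subseteq> vertices P" and k1: "Poly_Mapping.keys m1 \<subseteq> vertices P"
    and d0: "mdeg m0 = 2" and d1: "mdeg m1 = 2" and ph: "phi_mon P m0 = phi_mon P m1" and ne: "m0 \<noteq> m1"
  shows "Poly_Mapping.single m0 c - Poly_Mapping.single m1 (c::'k::comm_ring_1) \<in> ideal_gen (polyring (vertices P)) (inner_minors P)"
proof -
  obtain a b where m0: "m0 = sm a + sm b" using mdeg2[OF d0] by blast
  obtain c' d where m1: "m1 = sm c' + sm d" using mdeg2[OF d1] by blast
  obtain a1 a2 where a: "a = (a1,a2)" by (cases a)
  obtain b1 b2 where b: "b = (b1,b2)" by (cases b)
  have Vab: "a \<in> vertices P" "b \<in> vertices P" using k0 unfolding m0 keys_sm2 by auto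
  have Vcd: "c' \<in> vertices P" "d \<in> vertices P" using k1 unfolding m1 keys_sm2 by auto
  have eq: "phi_exp P a + phi_exp P b = phi_exp P c' + phi_exp P d"
    using ph unfolding m0 m1 phi_mon_sm2 .
  have L: "\<And>t. Poly_Mapping.lookup (phi_exp P a) t + Poly_Mapping.lookup (phi_exp P b) t
     = Poly_Mapping.lookup (phi_exp P c') t + Poly_Mapping.lookup (phi_exp P d) t"
    by (metis eq lookup_add)
  have hH: "(Hint P a = Hint P c' \<and> Hint P b = Hint P d) \<or> (Hint P a = Hint P d \<and> Hint P b = Hint P c')"
    apply (rule pair_eq)
    subgoal for X using L[of "hvar X"] by (simp add: lookup_phi_exp[OF fin])
    done
  have hV: "(Vint P a = Vint P c' \<and> Vint P b = Vint P d) \<or> (Vint P a = Vint P d \<and> Vint P b = Vint P c')"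
    apply (rule pair_eq)
    subgoal for X using L[of "vvar X"] by (simp add: lookup_phi_exp[OF fin])
    done
  have rowI: "Hint P x = Hint P y \<Longrightarrow> snd x = snd y" for x y using Hint_row[OF fin] by blast
  have colI: "Vint P x = Vint P y \<Longrightarrow> fst x = fst y" for x y using Vint_col[OF fin] by blast
  have m1eq: "m1 = sm (a1,b2) + sm (b1,a2)" and cd: "(c' = (b1,a2) \<and> d = (a1,b2)) \<or> (c' = (a1,b2) \<and> d = (b1,a2))"
  proof -
    have "(c' = (b1,a2) \<and> d = (a1,b2)) \<or> (c' = (a1,b2) \<and> d = (b1,a2))"
    proof (cases "Hint P a = Hint P c' \<and> Hint P b = Hint P d")
      case H1: True
      then have s: "snd c' = a2" "snd d = b2" using rowI a b by (metis snd_conv)+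
      show ?thesis
      proof (cases "Vint P a = Vint P c' \<and> Vint P b = Vint P d")
        case True
        then have "fst c' = a1" "fst d = b1" using colI a b by (metis fst_conv)+
        then have "c' = a" "d = b" using s a b by (simp_all add: prod_eq_iff)
        then have False using ne m0 m1 by simp
        then show ?thesis ..
      next
        case False
        then have "Vint P a = Vint P d \<and> Vint P b = Vint P c'" using hV by blast
        then have "fst d = a1" "fst c' = b1" using colI a b by (metis fst_conv)+
        then show ?thesis using s by (simp add: prod_eq_iff)
      qed
    next
      case False
      then have H2: "Hint P a = Hint P d \<and> Hint P b = Hint P c'" using hH by blast
      then have s: "snd d = a2" "snd c' = b2" using rowI a b by (metis snd_conv)+
      show ?thesis
      proof (cases "Vint P a = Vint P c' \<and> Vint P b = Vint P d")
        case True
        then have "fst c' = a1" "fst d = b1" using colI a b by (metis fst_conv)+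
        then show ?thesis using s by (simp add: prod_eq_iff)
      next
        case False
        then have "Vint P a = Vint P d \<and> Vint P b = Vint P c'" using hV by blast
        then have "fst d = a1" "fst c' = b1" using colI a b by (metis fst_conv)+
        then have "d = a" "c' = b" using s a b by (simp_all add: prod_eq_iff)
        then have False using ne m0 m1 by (simp add: add.commute)
        then show ?thesis ..
      qed
    qed
    then show "(c' = (b1,a2) \<and> d = (a1,b2)) \<or> (c' = (a1,b2) \<and> d = (b1,a2))" .
    then show "m1 = sm (a1,b2) + sm (b1,a2)" using m1 by (auto simp: add.commute)
  qed
  have Vcd': "(a1,b2) \<in> vertices P" "(b1,a2) \<in> vertices P" using cd Vcd by auto
  have eq': "phi_exp P (a1,a2) + phi_exp P (b1,b2) = phi_exp P (a1,b2) + phi_exp P (b1,a2)"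
    using ph unfolding m0 m1eq phi_mon_sm2 a b .
  have n1: "a1 \<noteq> b1"
  proof
    assume "a1 = b1"
    then have "m1 = sm b + sm a" using m1eq a b by simp
    then show False using ne m0 by (simp add: add.commute)
  qed
  have n2: "a2 \<noteq> b2"
  proof
    assume "a2 = b2"
    then have "m1 = sm a + sm b" using m1eq a b by simp
    then show False using ne m0 by simp
  qed
  show ?thesis
  proof (cases "a1 < b1")
    case True
    show ?thesis using core[OF fin True n2 Vab[unfolded a b] Vcd' eq', of c] unfolding m0 m1eq a b .
  next
    case False
    then have lt: "b1 < a1" using n1 by simp
    have eq'': "phi_exp P (b1,b2) + phi_exp P (a1,a2) = phi_exp P (b1,a2) + phi_exp P (a1,b2)"
      using eq' by (simp add: add.commute)
    have "Poly_Mapping.single (sm (b1,b2) + sm (a1,a2)) c - Poly_Mapping.single (sm (b1,a2) + sm (a1,b2)) c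
      \<in> ideal_gen (polyring (vertices P)) (inner_minors P)"
      using core[OF fin lt n2[symmetric] Vab(2,1)[unfolded a b] Vcd'(2,1) eq'', of c] .
    moreover have "sm (b1,b2) + sm (a1,a2) = m0" "sm (b1,a2) + sm (a1,b2) = m1"
      using m0 m1eq a b by (simp_all add: add.commute)
    ultimately show ?thesis by simp
  qed
qed




lemma deg2:
  assumes fin: "finite P"
  shows "p \<in> graded_part 2 (toric_ideal P) \<Longrightarrow> (p::'k::comm_ring_1 poly2) \<in> ideal_gen (polyring (vertices P)) (inner_minors P)"
proof (induction "card (Poly_Mapping.keys p)" arbitrary: p rule: less_induct)
  case less
  have pr: "p \<in> polyring (vertices P)" and ph: "phi P p = 0" and hd: "homogeneous_of_degree 2 p"
    using less.prems unfolding graded_part_def toric_ideal_def by auto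
  show ?case
  proof (cases "p = 0")
    case True then show ?thesis by (simp add: ideal_gen.zero)
  next
    case False
    then obtain m0 where m0: "m0 \<in> Poly_Mapping.keys p" by (metis keys_eq_empty ex_in_conv)
    define t where "t = phi_mon P m0"
    define c0 where "c0 = Poly_Mapping.lookup p m0"
    have c0: "c0 \<noteq> 0" using m0 unfolding c0_def by (simp add: in_keys_iff)
    have "\<exists>m1\<in>Poly_Mapping.keys p. m1 \<noteq> m0 \<and> phi_mon P m1 = t"
    proof (rule ccontr)
      assume na: "\<not> ?thesis"
      have "0 = Poly_Mapping.lookup (phi P p) t" using ph by simp
      also have "\<dots> = (\<Sum>m\<in>Poly_Mapping.keys p. if phi_mon P m = t then Poly_Mapping.lookup p m else 0)"
        by (rule lookup_phi)
      also have "\<dots> = (if phi_mon P m0 = t then Poly_Mapping.lookup p m0 else 0)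
          + (\<Sum>m\<in>Poly_Mapping.keys p - {m0}. if phi_mon P m = t then Poly_Mapping.lookup p m else 0)"
        using m0 by (simp add: sum.remove)
      also have "(\<Sum>m\<in>Poly_Mapping.keys p - {m0}. if phi_mon P m = t then Poly_Mapping.lookup p m else 0) = 0"
        using na by (intro sum.neutral) auto
      finally show False using c0 unfolding t_def c0_def by simp
    qed
    then obtain m1 where m1: "m1 \<in> Poly_Mapping.keys p" "m1 \<noteq> m0" "phi_mon P m1 = t" by blast
    define D where "D = Poly_Mapping.single m0 c0 - Poly_Mapping.single m1 c0"
    define p' where "p' = p - D"
    have lp': "Poly_Mapping.lookup p' m = Poly_Mapping.lookup p m - (if m = m0 then c0 else 0) + (if m = m1 then c0 else 0)" for m
      unfolding p'_def D_def by (simp add: lookup_minus lookup_single when_def)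
    have kp': "Poly_Mapping.keys p' \<subseteq> Poly_Mapping.keys p - {m0}"
    proof
      fix m assume "m \<in> Poly_Mapping.keys p'"
      then have "Poly_Mapping.lookup p' m \<noteq> 0" by (simp add: in_keys_iff)
      then show "m \<in> Poly_Mapping.keys p - {m0}"
        using lp'[of m] m1(1,2) unfolding c0_def by (auto simp: in_keys_iff split: if_splits)
    qed
    have card: "card (Poly_Mapping.keys p') < card (Poly_Mapping.keys p)"
      by (rule psubset_card_mono) (use kp' m0 in auto)
    have pr': "p' \<in> polyring (vertices P)" using pr kp' unfolding polyring_def by blast
    have ph': "phi P p' = 0"
      unfolding p'_def D_def phi_diff phi_single using ph m1(3) unfolding t_def by simp
    have hd': "homogeneous_of_degree 2 p'" using hd kp' unfolding homogeneous_of_degree_def by blast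
    have IH: "p' \<in> ideal_gen (polyring (vertices P)) (inner_minors P)"
      using less.hyps[OF card] pr' ph' hd' unfolding graded_part_def toric_ideal_def by blast
    have D: "D \<in> ideal_gen (polyring (vertices P)) (inner_minors P)"
      unfolding D_def
    proof (rule bin[OF fin])
      show "Poly_Mapping.keys m0 \<subseteq> vertices P" "Poly_Mapping.keys m1 \<subseteq> vertices P"
        using pr m0 m1(1) unfolding polyring_def by auto
      show "mdeg m0 = 2" "mdeg m1 = 2" using hd m0 m1(1) unfolding homogeneous_of_degree_def by auto
      show "phi_mon P m0 = phi_mon P m1" using m1(3) t_def by simp
      show "m0 \<noteq> m1" using m1(2) by simp
    qed
    have "p = p' + D" unfolding p'_def by simp
    then show ?thesis using ideal_gen.add[OF IH D] by simp
  qed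
qed

theorem lemma3p1:
  fixes P :: "(nat \<times> nat) set"
  assumes "polyomino P"
  shows "(polyomino_ideal P :: 'k::field poly2 set)
           = ideal_gen (polyring (vertices P)) (graded_part 2 (toric_ideal P))"
proof -
  have fin: "finite P" using assms by (simp add: polyomino_def)
  show ?thesis
  proof
    show "(polyomino_ideal P :: 'k::field poly2 set) \<subseteq> ideal_gen (polyring (vertices P)) (graded_part 2 (toric_ideal P))"
      unfolding polyomino_ideal_def
    proof (rule ideal_gen_sub)
      show "(inner_minors P :: 'k poly2 set) \<subseteq> ideal_gen (polyring (vertices P)) (graded_part 2 (toric_ideal P))"
      proof
        fix g :: "'k poly2" assume "g \<in> inner_minors P"
        then obtain a b where "g = var a * var b - var (fst a, snd b) * var (fst b, snd a)" "inner_interval P a b"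
          unfolding inner_minors_def by blast
        then have "g \<in> graded_part 2 (toric_ideal P)" using minor_in_J[OF fin] by simp
        then show "g \<in> ideal_gen (polyring (vertices P)) (graded_part 2 (toric_ideal P))" by (rule ideal_gen.gen)
      qed
    qed
    show "ideal_gen (polyring (vertices P)) (graded_part 2 (toric_ideal P)) \<subseteq> (polyomino_ideal P :: 'k::field poly2 set)"
      unfolding polyomino_ideal_def
      by (rule ideal_gen_sub) (use deg2[OF fin] in blast)
  qed
qed


end
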